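(* Let $\Omega_m$ be a finite set with $m$ elements, $\mathcal F=2^{\Omega_m}$. (a) For any set function $v:2^{\Omega_m}\to[0,\infty)$ and $A,B\subset\Omega_m$, if $A=\emptyset$, or $B=\emptyset$, or $A=\Omega_m$, or $B=\Omega_m$, or $A\subset B$, or $A\supset B$, or $A=B$, then $v(A\cap B)+v(A\cup B)=v(A)+v(B)$. (b) Let $v_0:2^{\Omega_m}\to[0,\infty)$ be non-decreasing with $v_0(\emptyset)=0$ and define $v_{n+1}(A)=\sup_{\mathcal I\in\Sigma}\mu_{v_n,\mathcal I}(A)$, $A\subset\Omega_m$, $n\ge0$. Then for every $n\ge1$ and $A,B\subset\Omega_m$, if $A\cap B=\emptyset$, or $A\cup B=\Omega_m$, or $|A|=1$, or $|A|=m-1$, then $v_n(A\cap B)+v_n(A\cup B)\le v_n(A)+v_n(B)$.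
   Context: $\Sigma$ denotes the set of all chains $\mathcal I\subset 2^{\Omega_m}$ (totally ordered by inclusion) containing $\emptyset$ and $\Omega_m$ and generating $2^{\Omega_m}$ as a $\sigma$-algebra (equivalently, maximal chains $\{\emptyset,\{\omega_{i_1}\},\{\omega_{i_1},\omega_{i_2}\},\dots,\Omega_m\}$ for an ordering $\omega_{i_1},\dots,\omega_{i_m}$ of $\Omega_m$). For non-decreasing $v$ and $\mathcal I\in\Sigma$, $\mu_{v,\mathcal I}$ is the unique (additive) measure on $2^{\Omega_m}$ with $\mu_{v,\mathcal I}(I)=v(I)$ for all $I\in\mathcal I$. A set function is non-decreasing if $v(A)\le v(B)$ for $A\subset B$. *)

theory Defs
  imports "HOL-Analysis.Analysis"
begin

definition nondecreasing_on :: "'a set \<Rightarrow> ('a set \<Rightarrow> real) \<Rightarrow> bool" where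
  "nondecreasing_on \<Omega> v \<longleftrightarrow> (\<forall>A B. A \<subseteq> B \<and> B \<subseteq> \<Omega> \<longrightarrow> v A \<le> v B)"

definition chains_Sigma :: "'a set \<Rightarrow> 'a set set set" where
  "chains_Sigma \<Omega> = {\<I>. \<I> \<subseteq> Pow \<Omega>
       \<and> (\<forall>I\<in>\<I>. \<forall>J\<in>\<I>. I \<subseteq> J \<or> J \<subseteq> I)
       \<and> {} \<in> \<I> \<and> \<Omega> \<in> \<I>
       \<and> sigma_sets \<Omega> \<I> = Pow \<Omega>}"

definition additive_on :: "'a set \<Rightarrow> ('a set \<Rightarrow> real) \<Rightarrow> bool" where
  "additive_on \<Omega> \<mu> \<longleftrightarrow> \<mu> {} = 0 \<and>
     (\<forall>A B. A \<subseteq> \<Omega> \<and> B \<subseteq> \<Omega> \<and> A \<inter> B = {} \<longrightarrow> \<mu> (A \<union> B) = \<mu> A + \<mu> B)"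

text \<open>\<open>\<mu>_{v,\<I>}\<close>: the unique additive measure on \<open>2^\<Omega>\<close> agreeing with \<open>v\<close> on \<open>\<I>\<close>
  (normalised to \<open>0\<close> outside \<open>2^\<Omega>\<close>, so that it is unique as a HOL function).\<close>
definition chain_measure :: "'a set \<Rightarrow> ('a set \<Rightarrow> real) \<Rightarrow> 'a set set \<Rightarrow> 'a set \<Rightarrow> real" where
  "chain_measure \<Omega> v \<I> = (THE \<mu>. additive_on \<Omega> \<mu> \<and> (\<forall>I\<in>\<I>. \<mu> I = v I)
                                  \<and> (\<forall>A. \<not> A \<subseteq> \<Omega> \<longrightarrow> \<mu> A = 0))"

fun v_iter :: "'a set \<Rightarrow> ('a set \<Rightarrow> real) \<Rightarrow> nat \<Rightarrow> 'a set \<Rightarrow> real" where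
  "v_iter \<Omega> v0 0 = v0"
| "v_iter \<Omega> v0 (Suc n) = (\<lambda>A. SUP \<I>\<in>chains_Sigma \<Omega>. chain_measure \<Omega> (v_iter \<Omega> v0 n) \<I> A)"

end

theory Submission
  imports Defs
begin


lemma chain_sum_exists:
  fixes v :: "'a set \<Rightarrow> real"
  assumes "finite I" "\<forall>J\<in>I. finite J" "\<forall>J\<in>I. \<forall>K\<in>I. J \<subseteq> K \<or> K \<subseteq> J" "v {} = 0"
  shows "\<exists>f. \<forall>J\<in>I. v J = sum f J"
  using assms
proof (induction "card I" arbitrary: I rule: less_induct)
  case less
  show ?case
  proof (cases "I \<subseteq> {{}}")
    case True then show ?thesis using less.prems(4) by (intro exI[of _ "\<lambda>_. 0"]) auto
  next
    case False
    then obtain J0 where J0: "J0 \<in> I" "J0 \<noteq> {}" by auto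
    have "Max (card ` I) \<in> card ` I" using less.prems(1) J0 by (intro Max_in) auto
    then obtain M where M: "M \<in> I" "card M = Max (card ` I)" by auto
    have Mmax: "\<forall>J\<in>I. card J \<le> card M" using M less.prems(1) by simp
    have "card J0 > 0" using J0 less.prems(2) by (simp add: card_gt_0_iff)
    hence "M \<noteq> {}" using Mmax J0 by fastforce
    have subM: "\<forall>J\<in>I. J \<subseteq> M"
    proof
      fix J assume J: "J \<in> I"
      show "J \<subseteq> M"
      proof (rule ccontr)
        assume "\<not> J \<subseteq> M"
        hence "M \<subseteq> J" "M \<noteq> J" using less.prems(3) J M by auto
        hence "card M < card J" using less.prems(2) J by (meson psubsetI psubset_card_mono)
        thus False using Mmax J by fastforce
      qed
    qed
    define I' where "I' = I - {M}"
    have "card I' < card I" unfolding I'_def using M less.prems(1) by (intro card_Diff1_less)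
    then obtain f' where f': "\<forall>J\<in>I'. v J = sum f' J"
      using less.hyps[of I'] less.prems unfolding I'_def by auto
    define I'' where "I'' = insert {} I'"
    have fin'': "finite I''" unfolding I''_def I'_def using less.prems(1) by simp
    have "Max (card ` I'') \<in> card ` I''" using fin'' by (intro Max_in) (auto simp: I''_def)
    then obtain L where L: "L \<in> I''" "card L = Max (card ` I'')" by auto
    have Lmax: "\<forall>J\<in>I''. card J \<le> card L" using L fin'' by simp
    have finL: "finite L" using L less.prems(2) unfolding I''_def I'_def by auto
    have subL: "\<forall>J\<in>I'. J \<subseteq> L"
    proof
      fix J assume J: "J \<in> I'"
      show "J \<subseteq> L"
      proof (rule ccontr)
        assume "\<not> J \<subseteq> L"
        hence "L \<subseteq> J" "L \<noteq> J" using less.prems(3) J L unfolding I''_def I'_def by auto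
        hence "card L < card J" using less.prems(2) J unfolding I'_def by (meson DiffD1 psubsetI psubset_card_mono)
        thus False using Lmax J unfolding I''_def by fastforce
      qed
    qed
    have LM: "L \<subseteq> M" "L \<noteq> M" using L subM \<open>M \<noteq> {}\<close> unfolding I''_def I'_def by auto
    have finM: "finite M" using M less.prems(2) by auto
    have vL: "v L = sum f' L" using L f' less.prems(4) unfolding I''_def by auto
    have cardpos: "card (M - L) > 0" using LM finM by (metis Diff_eq_empty_iff card_gt_0_iff finite_Diff subset_antisym)
    define f where "f = (\<lambda>\<omega>. if \<omega> \<in> M - L then (v M - v L) / card (M - L) else f' \<omega>)"
    have "\<forall>J\<in>I. v J = sum f J"
    proof
      fix J assume J: "J \<in> I"
      show "v J = sum f J"
      proof (cases "J = M")
        case True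
        have "sum f M = sum f (M - L) + sum f L" using finM LM by (simp add: sum.subset_diff)
        also have "sum f L = sum f' L" unfolding f_def by (rule sum.cong) auto
        also have "sum f (M - L) = v M - v L" unfolding f_def using cardpos by simp
        finally show ?thesis using True vL by simp
      next
        case False
        hence "J \<in> I'" using J unfolding I'_def by auto
        hence "J \<subseteq> L" using subL by auto
        hence "sum f J = sum f' J" unfolding f_def by (intro sum.cong) auto
        thus ?thesis using f' \<open>J \<in> I'\<close> by simp
      qed
    qed
    thus ?thesis by blast
  qed
qed

lemma add_finite_union:
  assumes "additive_on \<Omega> \<mu>" "finite F" "disjoint_family_on A F" "\<forall>i\<in>F. A i \<subseteq> \<Omega>"
  shows "\<mu> (\<Union>i\<in>F. A i) = (\<Sum>i\<in>F. \<mu> (A i))"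
  using assms(2-4)
proof (induction F rule: finite_induct)
  case empty then show ?case using assms(1) by (simp add: additive_on_def)
next
  case (insert x F)
  have e: "(\<Union>i\<in>insert x F. A i) = A x \<union> (\<Union>i\<in>F. A i)" by auto
  have d: "A x \<inter> (\<Union>i\<in>F. A i) = {}" using insert.prems(1) insert.hyps(2)
    unfolding disjoint_family_on_def by auto
  have df: "disjoint_family_on A F" using insert.prems(1) by (auto simp: disjoint_family_on_def)
  have s1: "A x \<subseteq> \<Omega>" "(\<Union>i\<in>F. A i) \<subseteq> \<Omega>" using insert.prems(2) by auto
  have "\<mu> (A x \<union> (\<Union>i\<in>F. A i)) = \<mu> (A x) + \<mu> (\<Union>i\<in>F. A i)"
    using assms(1) s1 d unfolding additive_on_def by blast
  also have "\<mu> (\<Union>i\<in>F. A i) = (\<Sum>i\<in>F. \<mu> (A i))" using insert.IH df insert.prems(2) by simp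
  finally show ?case using e insert.hyps by simp
qed

lemma additive_modular:
  assumes "additive_on \<Omega> \<mu>" "A \<subseteq> \<Omega>" "B \<subseteq> \<Omega>"
  shows "\<mu> (A \<inter> B) + \<mu> (A \<union> B) = \<mu> A + \<mu> B"
proof -
  have add: "\<And>X Y. X \<subseteq> \<Omega> \<Longrightarrow> Y \<subseteq> \<Omega> \<Longrightarrow> X \<inter> Y = {} \<Longrightarrow> \<mu> (X \<union> Y) = \<mu> X + \<mu> Y"
    using assms(1) unfolding additive_on_def by blast
  have "A \<union> B = A \<union> (B - A)" by auto
  hence 1: "\<mu> (A \<union> B) = \<mu> A + \<mu> (B - A)" using add[of A "B - A"] assms by auto
  have "B = (A \<inter> B) \<union> (B - A)" by auto
  hence 2: "\<mu> B = \<mu> (A \<inter> B) + \<mu> (B - A)" using add[of "A \<inter> B" "B - A"] assms by auto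
  show ?thesis using 1 2 by simp
qed



lemma chain_unique:
  assumes I: "\<I> \<in> chains_Sigma \<Omega>" and fin: "finite \<Omega>"
    and a1: "additive_on \<Omega> \<mu>1" and a2: "additive_on \<Omega> \<mu>2"
    and eq: "\<forall>J\<in>\<I>. \<mu>1 J = \<mu>2 J" and X: "X \<subseteq> \<Omega>"
  shows "\<mu>1 X = \<mu>2 X"
proof -
  have Isub: "\<I> \<subseteq> Pow \<Omega>" and ch: "\<forall>I\<in>\<I>. \<forall>J\<in>\<I>. I \<subseteq> J \<or> J \<subseteq> I"
    and Om: "\<Omega> \<in> \<I>" and sig: "sigma_sets \<Omega> \<I> = Pow \<Omega>"
    using I unfolding chains_Sigma_def by auto
  have st: "Int_stable \<I>" unfolding Int_stable_def
  proof (intro ballI)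
    fix a b assume "a \<in> \<I>" "b \<in> \<I>"
    thus "a \<inter> b \<in> \<I>" using ch by (metis Int_absorb1 Int_absorb2)
  qed
  have Xs: "X \<in> sigma_sets \<Omega> \<I>" using X sig by auto
  from st Isub Xs show ?thesis
  proof (induction rule: sigma_sets_induct_disjoint)
    case (basic A) then show ?case using eq by auto
  next
    case empty then show ?case using a1 a2 by (simp add: additive_on_def)
  next
    case (compl A)
    have As: "A \<subseteq> \<Omega>" using compl.hyps sig by auto
    have "\<Omega> = A \<union> (\<Omega> - A)" using As by auto
    hence "\<mu>1 \<Omega> = \<mu>1 A + \<mu>1 (\<Omega> - A)" "\<mu>2 \<Omega> = \<mu>2 A + \<mu>2 (\<Omega> - A)"
      using a1 a2 As unfolding additive_on_def by (metis Diff_disjoint Diff_subset)+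
    then show ?case using compl.IH eq Om by auto
  next
    case (union A)
    have As: "\<And>i. A i \<subseteq> \<Omega>" using union.hyps(2) sig by auto
    define N where "N = {i. A i \<noteq> {}}"
    have "inj_on A N"
    proof (rule inj_onI)
      fix i j assume ij: "i \<in> N" "j \<in> N" "A i = A j"
      show "i = j"
      proof (rule ccontr)
        assume "i \<noteq> j"
        hence "A i \<inter> A j = {}" using union.hyps(1) unfolding disjoint_family_on_def by auto
        thus False using ij unfolding N_def by auto
      qed
    qed
    moreover have "A ` N \<subseteq> Pow \<Omega>" using As by auto
    moreover have "finite (Pow \<Omega>)" using fin by simp
    ultimately have finN: "finite N" using finite_subset finite_imageD by metis
    have U: "(\<Union>i. A i) = (\<Union>i\<in>N. A i)" unfolding N_def by auto
    have dN: "disjoint_family_on A N" using union.hyps(1) by (auto simp: disjoint_family_on_def)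
    have "\<mu>1 (\<Union>i\<in>N. A i) = (\<Sum>i\<in>N. \<mu>1 (A i))"
      using add_finite_union[OF a1 finN dN] As by auto
    also have "\<dots> = (\<Sum>i\<in>N. \<mu>2 (A i))" using union.IH by simp
    also have "\<dots> = \<mu>2 (\<Union>i\<in>N. A i)"
      using add_finite_union[OF a2 finN dN] As by auto
    finally show ?case using U by simp
  qed
qed

lemma chain_measure_props:
  assumes I: "\<I> \<in> chains_Sigma \<Omega>" and fin: "finite \<Omega>" and v0: "v {} = 0"
  shows "additive_on \<Omega> (chain_measure \<Omega> v \<I>) \<and> (\<forall>J\<in>\<I>. chain_measure \<Omega> v \<I> J = v J)"
proof -
  let ?P = "\<lambda>\<mu>. additive_on \<Omega> \<mu> \<and> (\<forall>I\<in>\<I>. \<mu> I = v I) \<and> (\<forall>A. \<not> A \<subseteq> \<Omega> \<longrightarrow> \<mu> A = 0)"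
  have Isub: "\<I> \<subseteq> Pow \<Omega>" and ch: "\<forall>I\<in>\<I>. \<forall>J\<in>\<I>. I \<subseteq> J \<or> J \<subseteq> I"
    using I unfolding chains_Sigma_def by auto
  have finI: "finite \<I>" using finite_subset[OF Isub] fin by simp
  have fJ: "\<forall>J\<in>\<I>. finite J" using Isub fin by (auto intro: finite_subset)
  obtain f where f: "\<forall>J\<in>\<I>. v J = sum f J"
    using chain_sum_exists[where v=v, OF finI fJ ch v0] by blast
  define \<mu> where "\<mu> = (\<lambda>X. if X \<subseteq> \<Omega> then sum f X else 0)"
  have "?P \<mu>"
  proof (intro conjI)
    show "additive_on \<Omega> \<mu>" unfolding additive_on_def
    proof (intro conjI allI impI)
      show "\<mu> {} = 0" unfolding \<mu>_def by simp
      fix A B assume AB: "A \<subseteq> \<Omega> \<and> B \<subseteq> \<Omega> \<and> A \<inter> B = {}"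
      have "finite A" "finite B" using fin AB finite_subset by auto
      then show "\<mu> (A \<union> B) = \<mu> A + \<mu> B"
        using AB unfolding \<mu>_def by (simp add: sum.union_disjoint)
    qed
    show "\<forall>I\<in>\<I>. \<mu> I = v I" using f Isub unfolding \<mu>_def by auto
    show "\<forall>A. \<not> A \<subseteq> \<Omega> \<longrightarrow> \<mu> A = 0" unfolding \<mu>_def by auto
  qed
    moreover have "\<mu>' = \<mu>" if P': "?P \<mu>'" for \<mu>'
  proof
    fix X
    have a1: "additive_on \<Omega> \<mu>'" and e1: "\<forall>I\<in>\<I>. \<mu>' I = v I" and z1: "\<forall>A. \<not> A \<subseteq> \<Omega> \<longrightarrow> \<mu>' A = 0"
      using P' by blast+
    have a2: "additive_on \<Omega> \<mu>" and e2: "\<forall>I\<in>\<I>. \<mu> I = v I" and z2: "\<forall>A. \<not> A \<subseteq> \<Omega> \<longrightarrow> \<mu> A = 0"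
      using \<open>?P \<mu>\<close> by blast+
    have e: "\<forall>J\<in>\<I>. \<mu>' J = \<mu> J" using e1 e2 by simp
    show "\<mu>' X = \<mu> X"
    proof (cases "X \<subseteq> \<Omega>")
      case True
      show ?thesis by (rule chain_unique[OF I fin a1 a2 e True])
    next
      case False
      have "\<mu>' X = 0" using z1 False by blast
      moreover have "\<mu> X = 0" using z2 False by blast
      ultimately show ?thesis by simp
    qed
  qed
  ultimately have "?P (chain_measure \<Omega> v \<I>)" unfolding chain_measure_def
    by (rule theI)
  thus ?thesis by blast
qed

lemma chains_Sigma_nonempty:
  assumes fin: "finite \<Omega>"
  shows "chains_Sigma \<Omega> \<noteq> {}"
proof -
  obtain xs where xs: "set xs = \<Omega>" "distinct xs" using finite_distinct_list[OF fin] by blast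
  define \<I> where "\<I> = (\<lambda>k. set (take k xs)) ` {..length xs}"
  have Isub: "\<I> \<subseteq> Pow \<Omega>"
  proof
    fix I assume "I \<in> \<I>"
    then obtain k where "I = set (take k xs)" unfolding \<I>_def by blast
    moreover have "set (take k xs) \<subseteq> set xs" by (rule set_take_subset)
    ultimately show "I \<in> Pow \<Omega>" using xs(1) by simp
  qed
  have ch: "\<forall>I\<in>\<I>. \<forall>J\<in>\<I>. I \<subseteq> J \<or> J \<subseteq> I"
  proof (intro ballI)
    fix I J assume "I \<in> \<I>" "J \<in> \<I>"
    then obtain i j where ij: "I = set (take i xs)" "J = set (take j xs)" unfolding \<I>_def by blast
    show "I \<subseteq> J \<or> J \<subseteq> I"
    proof (cases "i \<le> j")
      case True
      then have "I \<subseteq> J" unfolding ij by (rule set_take_subset_set_take)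
      then show ?thesis ..
    next
      case False
      then have "j \<le> i" by simp
      then have "J \<subseteq> I" unfolding ij by (rule set_take_subset_set_take)
      then show ?thesis ..
    qed
  qed
  have e: "{} \<in> \<I>" unfolding \<I>_def by (rule image_eqI[of _ _ 0]) auto
  have o: "\<Omega> \<in> \<I>" unfolding \<I>_def using xs(1) by (intro image_eqI[of _ _ "length xs"]) auto
  interpret sa: sigma_algebra \<Omega> "sigma_sets \<Omega> \<I>" using Isub by (rule sigma_algebra_sigma_sets)
  have sing: "{x} \<in> sigma_sets \<Omega> \<I>" if "x \<in> \<Omega>" for x
  proof -
    have "x \<in> set xs" using that xs(1) by simp
    then obtain k where k: "k < length xs" "xs ! k = x" by (auto simp: in_set_conv_nth)
    have d: "distinct (take (Suc k) xs)" using xs(2) by (rule distinct_take)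
    have tk: "take (Suc k) xs = take k xs @ [x]" using k by (simp add: take_Suc_conv_app_nth)
    have "x \<notin> set (take k xs)" using d tk by simp
    hence "set (take (Suc k) xs) - set (take k xs) = {x}" using tk by auto
    moreover have "set (take (Suc k) xs) \<in> \<I>" "set (take k xs) \<in> \<I>" unfolding \<I>_def using k by auto
    ultimately have "set (take (Suc k) xs) - set (take k xs) \<in> sigma_sets \<Omega> \<I>"
      by (intro sa.Diff sigma_sets.Basic)
    thus ?thesis using \<open>set (take (Suc k) xs) - set (take k xs) = {x}\<close> by simp
  qed
  have "sigma_sets \<Omega> \<I> = Pow \<Omega>"
  proof
    show "sigma_sets \<Omega> \<I> \<subseteq> Pow \<Omega>" using sigma_sets_into_sp[OF Isub] by auto
    show "Pow \<Omega> \<subseteq> sigma_sets \<Omega> \<I>"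
    proof
      fix X assume "X \<in> Pow \<Omega>"
      hence X: "X \<subseteq> \<Omega>" by auto
      hence "finite X" using fin finite_subset by auto
      have "(\<Union>x\<in>X. {x}) \<in> sigma_sets \<Omega> \<I>"
        using \<open>finite X\<close> by (rule sa.finite_UN) (use sing X in auto)
      moreover have "(\<Union>x\<in>X. {x}) = X" by auto
      ultimately show "X \<in> sigma_sets \<Omega> \<I>" by simp
    qed
  qed
  hence "\<I> \<in> chains_Sigma \<Omega>" unfolding chains_Sigma_def using Isub ch e o by auto
  thus ?thesis by auto
qed



lemma sup_attained:
  fixes h :: "'b \<Rightarrow> real"
  assumes "finite S" "S \<noteq> {}"
  shows "\<exists>I\<in>S. (SUP I\<in>S. h I) = h I"
proof -
  have "(SUP I\<in>S. h I) = Max (h ` S)" using assms by (simp add: cSup_eq_Max)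
  moreover have "Max (h ` S) \<in> h ` S" using assms by (intro Max_in) auto
  ultimately show ?thesis by auto
qed

lemma sup_upper:
  fixes h :: "'b \<Rightarrow> real"
  assumes "finite S" "I \<in> S"
  shows "h I \<le> (SUP I\<in>S. h I)"
proof (rule cSUP_upper[OF assms(2)])
  show "bdd_above (h ` S)" using assms(1) by (intro bdd_above_finite) auto
qed

lemma sup_ineq:
  fixes g :: "'b \<Rightarrow> 'a set \<Rightarrow> real"
  assumes fS: "finite S" and neS: "S \<noteq> {}" and add: "\<forall>I\<in>S. additive_on \<Omega> (g I)"
    and c: "\<forall>I\<in>S. g I \<Omega> = c" and AB: "A \<subseteq> \<Omega>" "B \<subseteq> \<Omega>" and cases: "A \<inter> B = {} \<or> A \<union> B = \<Omega>"
  shows "(SUP I\<in>S. g I (A \<inter> B)) + (SUP I\<in>S. g I (A \<union> B)) \<le> (SUP I\<in>S. g I A) + (SUP I\<in>S. g I B)"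
proof -
  obtain I1 where I1: "I1 \<in> S" "(SUP I\<in>S. g I (A \<inter> B)) = g I1 (A \<inter> B)"
    using sup_attained[OF fS neS, of "\<lambda>I. g I (A \<inter> B)"] by blast
  obtain I2 where I2: "I2 \<in> S" "(SUP I\<in>S. g I (A \<union> B)) = g I2 (A \<union> B)"
    using sup_attained[OF fS neS, of "\<lambda>I. g I (A \<union> B)"] by blast
  have mod: "g I (A \<inter> B) + g I (A \<union> B) = g I A + g I B" if "I \<in> S" for I
    using additive_modular[of \<Omega> "g I" A B] add that AB by auto
  have le: "g I A + g I B \<le> (SUP I\<in>S. g I A) + (SUP I\<in>S. g I B)" if "I \<in> S" for I
    using sup_upper[OF fS that, of "\<lambda>I. g I A"] sup_upper[OF fS that, of "\<lambda>I. g I B"] by simp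
  from cases show ?thesis
  proof
    assume d: "A \<inter> B = {}"
    have "g I1 (A \<inter> B) = 0" "g I2 (A \<inter> B) = 0" using d add I1(1) I2(1) unfolding additive_on_def by auto
    hence "(SUP I\<in>S. g I (A \<inter> B)) + (SUP I\<in>S. g I (A \<union> B)) = g I2 (A \<inter> B) + g I2 (A \<union> B)"
      using I1 I2 by simp
    also have "\<dots> = g I2 A + g I2 B" by (rule mod[OF I2(1)])
    finally show ?thesis using le[OF I2(1)] by simp
  next
    assume u: "A \<union> B = \<Omega>"
    have "g I1 (A \<union> B) = c" "g I2 (A \<union> B) = c" using u c I1(1) I2(1) by auto
    hence "(SUP I\<in>S. g I (A \<inter> B)) + (SUP I\<in>S. g I (A \<union> B)) = g I1 (A \<inter> B) + g I1 (A \<union> B)"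
      using I1 I2 by simp
    also have "\<dots> = g I1 A + g I1 B" by (rule mod[OF I1(1)])
    finally show ?thesis using le[OF I1(1)] by simp
  qed
qed

lemma reduce_cases:
  assumes fin: "finite \<Omega>" and m: "card \<Omega> = m" and AB: "A \<subseteq> \<Omega>" "B \<subseteq> \<Omega>"
    and h: "A \<inter> B = {} \<or> A \<union> B = \<Omega> \<or> card A = 1 \<or> card A = m - 1"
  shows "A \<inter> B = {} \<or> A \<union> B = \<Omega> \<or> A \<subseteq> B \<or> B \<subseteq> A"
proof -
  have finA: "finite A" using fin AB finite_subset by auto
  consider "A \<inter> B = {}" | "A \<union> B = \<Omega>" | "card A = 1" | "card A = m - 1" using h by blast
  then show ?thesis
  proof cases
    case 3
    then obtain a where a: "A = {a}" by (rule card_1_singletonE)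
    then show ?thesis by (cases "a \<in> B") auto
  next
    case 4
    show ?thesis
    proof (cases "m = 0")
      case True
      then have "\<Omega> = {}" using m fin by simp
      then show ?thesis using AB by auto
    next
      case False
      have "card (\<Omega> - A) = card \<Omega> - card A" using AB finA by (simp add: card_Diff_subset)
      also have "\<dots> = 1" using 4 m False by simp
      finally obtain a where a: "\<Omega> - A = {a}" by (rule card_1_singletonE)
      show ?thesis
      proof (cases "a \<in> B")
        case True
        have "A \<union> B = \<Omega>"
        proof
          show "A \<union> B \<subseteq> \<Omega>" using AB by auto
          show "\<Omega> \<subseteq> A \<union> B"
          proof
            fix x assume "x \<in> \<Omega>"
            show "x \<in> A \<union> B"
            proof (cases "x \<in> A")
              case False
              then have "x \<in> \<Omega> - A" using \<open>x \<in> \<Omega>\<close> by simp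
              then have "x = a" using a by simp
              then show ?thesis using True by simp
            qed simp
          qed
        qed
        then show ?thesis by simp
      next
        case False
        have "B \<subseteq> A"
        proof
          fix x assume x: "x \<in> B"
          show "x \<in> A"
          proof (rule ccontr)
            assume "x \<notin> A"
            then have "x \<in> \<Omega> - A" using x AB by auto
            then have "x = a" using a by simp
            then show False using False x by simp
          qed
        qed
        then show ?thesis by simp
      qed
    qed
  qed auto
qed

theorem proposition21:
  fixes \<Omega> :: "'a set" and m :: nat
  assumes "finite \<Omega>" and "card \<Omega> = m"
  shows "(\<forall>(v :: 'a set \<Rightarrow> real) A B.
           (\<forall>C. C \<subseteq> \<Omega> \<longrightarrow> 0 \<le> v C) \<longrightarrow> A \<subseteq> \<Omega> \<longrightarrow> B \<subseteq> \<Omega> \<longrightarrow>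
           (A = {} \<or> B = {} \<or> A = \<Omega> \<or> B = \<Omega> \<or> A \<subseteq> B \<or> B \<subseteq> A \<or> A = B) \<longrightarrow>
           v (A \<inter> B) + v (A \<union> B) = v A + v B) \<and>
        (\<forall>v0 :: 'a set \<Rightarrow> real.
           (\<forall>C. C \<subseteq> \<Omega> \<longrightarrow> 0 \<le> v0 C) \<longrightarrow> nondecreasing_on \<Omega> v0 \<longrightarrow> v0 {} = 0 \<longrightarrow>
           (\<forall>n \<ge> 1. \<forall>A B. A \<subseteq> \<Omega> \<longrightarrow> B \<subseteq> \<Omega> \<longrightarrow>
              (A \<inter> B = {} \<or> A \<union> B = \<Omega> \<or> card A = 1 \<or> card A = m - 1) \<longrightarrow>
              v_iter \<Omega> v0 n (A \<inter> B) + v_iter \<Omega> v0 n (A \<union> B)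
                \<le> v_iter \<Omega> v0 n A + v_iter \<Omega> v0 n B))"
proof (intro conjI allI impI)
  fix v :: "'a set \<Rightarrow> real" and A B
  assume AB: "A \<subseteq> \<Omega>" "B \<subseteq> \<Omega>"
    and h: "A = {} \<or> B = {} \<or> A = \<Omega> \<or> B = \<Omega> \<or> A \<subseteq> B \<or> B \<subseteq> A \<or> A = B"
  have sub: "v (A \<inter> B) + v (A \<union> B) = v A + v B" if "A \<subseteq> B" for A B :: "'a set"
  proof -
    have "A \<inter> B = A" "A \<union> B = B" using that by auto
    thus ?thesis by simp
  qed
  have "A \<subseteq> B \<or> B \<subseteq> A" using h AB by auto
  then show "v (A \<inter> B) + v (A \<union> B) = v A + v B"
  proof
    assume "B \<subseteq> A"
    then have "v (B \<inter> A) + v (B \<union> A) = v B + v A" by (rule sub)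
    then show ?thesis by (simp add: Int_commute Un_commute)
  qed (rule sub)
next
  fix v0 :: "'a set \<Rightarrow> real" and n :: nat and A B
  assume v00: "v0 {} = 0" and n: "n \<ge> 1" and AB: "A \<subseteq> \<Omega>" "B \<subseteq> \<Omega>"
    and h: "A \<inter> B = {} \<or> A \<union> B = \<Omega> \<or> card A = 1 \<or> card A = m - 1"
  let ?S = "chains_Sigma \<Omega>"
  have fin: "finite \<Omega>" by fact
  have finS: "finite ?S"
  proof (rule finite_subset)
    show "?S \<subseteq> Pow (Pow \<Omega>)" unfolding chains_Sigma_def by auto
    show "finite (Pow (Pow \<Omega>))" using fin by simp
  qed
  have neS: "?S \<noteq> {}" using chains_Sigma_nonempty[OF fin] .
  have w0: "v_iter \<Omega> v0 k {} = 0" for k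
  proof (induction k)
    case 0 then show ?case using v00 by simp
  next
    case (Suc k)
    have "\<forall>I\<in>?S. chain_measure \<Omega> (v_iter \<Omega> v0 k) I {} = 0"
      using chain_measure_props[where v="v_iter \<Omega> v0 k", OF _ fin Suc] unfolding additive_on_def by blast
    hence "(SUP I\<in>?S. chain_measure \<Omega> (v_iter \<Omega> v0 k) I {}) = (SUP I\<in>?S. (0::real))"
      by (intro SUP_cong) auto
    also have "\<dots> = 0" using neS by simp
    finally show ?case by simp
  qed
  obtain k where k: "n = Suc k" using n by (cases n) auto
  let ?g = "\<lambda>I. chain_measure \<Omega> (v_iter \<Omega> v0 k) I"
  have add: "\<forall>I\<in>?S. additive_on \<Omega> (?g I)" using chain_measure_props[where v="v_iter \<Omega> v0 k", OF _ fin w0] by blast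
  have c: "\<forall>I\<in>?S. ?g I \<Omega> = v_iter \<Omega> v0 k \<Omega>"
  proof
    fix I assume I: "I \<in> ?S"
    hence "\<Omega> \<in> I" unfolding chains_Sigma_def by auto
    thus "?g I \<Omega> = v_iter \<Omega> v0 k \<Omega>" using chain_measure_props[where v="v_iter \<Omega> v0 k", OF I fin w0] by blast
  qed
  have vn: "v_iter \<Omega> v0 n X = (SUP I\<in>?S. ?g I X)" for X using k by simp
  have r: "A \<inter> B = {} \<or> A \<union> B = \<Omega> \<or> A \<subseteq> B \<or> B \<subseteq> A"
    using reduce_cases[OF fin assms(2) AB h] .
  show "v_iter \<Omega> v0 n (A \<inter> B) + v_iter \<Omega> v0 n (A \<union> B) \<le> v_iter \<Omega> v0 n A + v_iter \<Omega> v0 n B"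
  proof (cases "A \<inter> B = {} \<or> A \<union> B = \<Omega>")
    case True
    show ?thesis unfolding vn using sup_ineq[OF finS neS add c AB True] .
  next
    case False
    hence "A \<subseteq> B \<or> B \<subseteq> A" using r by blast
    then show ?thesis
    proof
      assume "A \<subseteq> B" hence "A \<inter> B = A" "A \<union> B = B" by auto
      thus ?thesis by simp
    next
      assume "B \<subseteq> A" hence "A \<inter> B = B" "A \<union> B = A" by auto
      thus ?thesis by simp
    qed
  qed
qed

end
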